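(* Consider the following stochastic evolution model. A finite domain $M_d$ (a ball of diameter $d$) of a convex, normal, balanced planar mosaic is described by $J+1$ nonnegative combinatorial counting variables $X_0,X_1,\dots,X_J$ (with $X_0=N^{\star}$, the total corner degree), each of which grows as $X_j\asymp d^2$ as $d\to\infty$; write $x_j=X_j/X_0$ for $j=1,\dots,J$ and $\underline{x}=(x_1,\dots,x_J)$. The evolution is driven by micro-events of $I+1$ types $R_0,\dots,R_I$. Events of type $R_i$ are triggered by clocks, the number of which is $C_i=\sum_{j=0}^J C_{i,j}X_j$ (with given deterministic coefficients $C_{i,j}$); each individual clock of type $R_i$ gives signals at the times of independent exponential random variables with parameter $\lambda_i>0$. When a micro-event of type $R_i$ occurs, each $X_j$ changes by a deterministic increment $\Delta X_j(i)$. Define $\gamma_i(\underline{x})=C_i\lambda_i/X_0$, $\gamma(\underline{x})=\sum_{i=0}^I\gamma_i(\underline{x})$, $p_i(\underline{x})=\gamma_i(\underline{x})/\gamma(\underline{x})$, $\nu_j(\underline{x})=\sum_{i=0}^I\Delta X_j(i)\,p_i(\underline{x})$ for $j=0,\dots,J$, and $\hat x_j(\underline{x})=\nu_j(\underline{x})/\nu_0(\underline{x})$. Assume that at time $t$ the (deterministic) state of the mosaic is given by $\underline{x}=(x_1(t),\dots,x_J(t))$, and let $\underline{\mathbf{x}}(t+\Delta t)=(\mathbf{x}_1(t+\Delta t),\dots,\mathbf{x}_J(t+\Delta t))$ denote the random state at time $t+\Delta t$. Consider a simultaneous limit parametrized by $\rho\to\infty$ in which $d(\rho)\to\infty$, $\Delta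 t(\rho)\to 0$ and $d(\rho)\,\Delta t(\rho)$ is constant in $\rho$. Then in this limit, for each $j=1,\dots,J$, the random variables $$\frac{\mathbf{x}_j(t+\Delta t)-x_j(t)}{\Delta t}$$ converge in probability to $$\gamma(\underline{x})\cdot\nu_0(\underline{x})\cdot\bigl(\hat x_j(\underline{x})-x_j\bigr),$$ i.e. to the right-hand side of the ODE $\frac{dx_j}{dt}=\gamma(\underline{x})\,\nu_0(\underline{x})\,(\hat x_j(\underline{x})-x_j)$.
   Context: A mosaic is a tessellation of the plane by convex polygonal cells; "balanced" (in the sense of Grünbaum–Shephard) means in particular that counts of cells, nodes and corner degrees in a ball of diameter $d$ are all of order $d^2$. Notation $f\asymp g$ means $C^{-1}g\le f\le Cg$ for a constant $C>0$ independent of $d$. The corner degree $N^{\star}$ is the sum over cells of the number of their regular vertices (points where two edges of the cell meet at an angle different from $\pi$), averaged with the analogous sum over nodes. The cumulative process of all micro-events is a Poisson process whose expected interarrival time $E(\Delta\mathbf{T})$ satisfies $1/E(\Delta\mathbf{T})=\sum_i C_i\lambda_i=X_0\gamma(\underline{x})$. The increments of $X_j$ over $[t,t+\Delta t]$ are the sums of the deterministic increments of all micro-events occurring in that interval. *)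

theory Defs
  imports "HOL-Probability.Probability"
begin

text \<open>Coefficients: Cc i j = C_{i,j}; lam i = lambda_i; dX i j = Delta X_j(i).  The state is
  x = (x_1,...,x_J); we use the convention x_0 = 1 (since x_j = X_j / X_0).\<close>

definition ext_state :: "(nat \<Rightarrow> real) \<Rightarrow> nat \<Rightarrow> real" where
  "ext_state x j = (if j = 0 then 1 else x j)"

definition clocks :: "(nat \<Rightarrow> nat \<Rightarrow> real) \<Rightarrow> nat \<Rightarrow> (nat \<Rightarrow> real) \<Rightarrow> nat \<Rightarrow> real" where
  "clocks Cc J X i = (\<Sum>j\<le>J. Cc i j * X j)"

text \<open>gamma_i(x) = C_i lambda_i / X_0, evaluated at the normalised counts (1, x_1, ..., x_J).\<close>
definition gamma_i :: "(nat \<Rightarrow> nat \<Rightarrow> real) \<Rightarrow> (nat \<Rightarrow> real) \<Rightarrow> nat \<Rightarrow> (nat \<Rightarrow> real) \<Rightarrow> nat \<Rightarrow> real" where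
  "gamma_i Cc lam J x i = clocks Cc J (ext_state x) i * lam i / ext_state x 0"

definition gamma :: "(nat \<Rightarrow> nat \<Rightarrow> real) \<Rightarrow> (nat \<Rightarrow> real) \<Rightarrow> nat \<Rightarrow> nat \<Rightarrow> (nat \<Rightarrow> real) \<Rightarrow> real" where
  "gamma Cc lam I J x = (\<Sum>i\<le>I. gamma_i Cc lam J x i)"

definition p_i :: "(nat \<Rightarrow> nat \<Rightarrow> real) \<Rightarrow> (nat \<Rightarrow> real) \<Rightarrow> nat \<Rightarrow> nat \<Rightarrow> (nat \<Rightarrow> real) \<Rightarrow> nat \<Rightarrow> real" where
  "p_i Cc lam I J x i = gamma_i Cc lam J x i / gamma Cc lam I J x"

definition nu :: "(nat \<Rightarrow> nat \<Rightarrow> real) \<Rightarrow> (nat \<Rightarrow> real) \<Rightarrow> (nat \<Rightarrow> nat \<Rightarrow> int) \<Rightarrow> nat \<Rightarrow> nat \<Rightarrow> (nat \<Rightarrow> real) \<Rightarrow> nat \<Rightarrow> real" where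
  "nu Cc lam dX I J x j = (\<Sum>i\<le>I. real_of_int (dX i j) * p_i Cc lam I J x i)"

definition xhat :: "(nat \<Rightarrow> nat \<Rightarrow> real) \<Rightarrow> (nat \<Rightarrow> real) \<Rightarrow> (nat \<Rightarrow> nat \<Rightarrow> int) \<Rightarrow> nat \<Rightarrow> nat \<Rightarrow> (nat \<Rightarrow> real) \<Rightarrow> nat \<Rightarrow> real" where
  "xhat Cc lam dX I J x j = nu Cc lam dX I J x j / nu Cc lam dX I J x 0"

definition conv_in_prob :: "('p \<Rightarrow> 'a measure) \<Rightarrow> ('p \<Rightarrow> 'a \<Rightarrow> real) \<Rightarrow> real \<Rightarrow> 'p filter \<Rightarrow> bool" where
  "conv_in_prob M Y L F \<longleftrightarrow>
     (\<forall>e>0. ((\<lambda>r. measure (M r) {\<omega> \<in> space (M r). \<bar>Y r \<omega> - L\<bar> > e}) \<longlongrightarrow> 0) F)"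

end

theory Submission
  imports Defs
begin

lemma shift_fact: "real (Suc n) * ((r::real)^(Suc n) / fact (Suc n)) = r * (r^n / fact n)"
proof -
  have "fact (Suc n) = real (Suc n) * (fact n::real)" by (simp only: fact_Suc)
  then have "real (Suc n) * (r^(Suc n) / fact (Suc n)) = real (Suc n) * (r * r^n) / (real (Suc n) * fact n)"
    by (simp only: power_Suc times_divide_eq_right)
  also have "\<dots> = r * r^n / fact n" by (rule mult_divide_mult_cancel_left) simp
  also have "\<dots> = r * (r^n / fact n)" by simp
  finally show ?thesis .
qed
lemma shift_fact2: "(real (Suc n))^2 * ((r::real)^(Suc n) / fact (Suc n)) = r * (real n * (r^n / fact n) + r^n / fact n)"
proof -
  have "(real (Suc n))^2 * ((r::real)^(Suc n) / fact (Suc n)) = real (Suc n) * (r * (r^n / fact n))"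
    using shift_fact[of n r] by (simp add: power2_eq_square del: of_nat_Suc)
  also have "\<dots> = r * (real n * (r^n / fact n) + r^n / fact n)"
    by (simp only: of_nat_Suc) (simp add: algebra_simps add_divide_distrib)
  finally show ?thesis .
qed
lemma poisson_sums0: "(\<lambda>k. (r::real)^k / fact k) sums exp r"
  using exp_converges[of r] by (simp add: divide_inverse mult.commute)

lemma poisson_sums1: "(\<lambda>k. real k * ((r::real)^k / fact k)) sums (r * exp r)"
proof -
  have "(\<lambda>n. real (Suc n) * (r^(Suc n) / fact (Suc n))) = (\<lambda>n. r * (r^n / fact n))"
    by (rule ext) (rule shift_fact)
  moreover have "(\<lambda>n. r * (r^n / fact n)) sums (r * exp r)"
    by (rule sums_mult[OF poisson_sums0])
  ultimately have "(\<lambda>n. real (Suc n) * (r^(Suc n) / fact (Suc n))) sums (r * exp r)" by simp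
  then show ?thesis by (subst (asm) sums_Suc_iff) simp
qed

lemma poisson_sums2: "(\<lambda>k. (real k)^2 * ((r::real)^k / fact k)) sums (r * (r * exp r + exp r))"
proof -
  have "(\<lambda>n. (real (Suc n))^2 * (r^(Suc n) / fact (Suc n))) = (\<lambda>n. r * (real n * (r^n / fact n) + r^n / fact n))"
    by (rule ext) (rule shift_fact2)
  moreover have "(\<lambda>n. r * (real n * (r^n / fact n) + r^n / fact n)) sums (r * (r * exp r + exp r))"
    by (rule sums_mult[OF sums_add[OF poisson_sums1 poisson_sums0]])
  ultimately have "(\<lambda>n. (real (Suc n))^2 * (r^(Suc n) / fact (Suc n))) sums (r * (r * exp r + exp r))" by simp
  then show ?thesis by (subst (asm) sums_Suc_iff) simp
qed

lemma poisson_var_sums: "(\<lambda>k. (r::real)^k / fact k * exp (-r) * (real k - r)^2) sums r"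
proof -
  have e: "(\<lambda>k. ((real k)^2 * (r^k / fact k) - 2 * r * (real k * (r^k / fact k)) + r^2 * (r^k / fact k)))
     sums (r * (r * exp r + exp r) - 2 * r * (r * exp r) + r^2 * exp r)"
    by (intro sums_add sums_diff sums_mult poisson_sums0 poisson_sums1 poisson_sums2)
  have "(\<lambda>k. exp (-r) * ((real k)^2 * (r^k / fact k) - 2 * r * (real k * (r^k / fact k)) + r^2 * (r^k / fact k)))
     sums (exp (-r) * (r * (r * exp r + exp r) - 2 * r * (r * exp r) + r^2 * exp r))"
    by (rule sums_mult[OF e])
  moreover have "exp (-r) * (r * (r * exp r + exp r) - 2 * r * (r * exp r) + r^2 * exp r) = r"
  proof -
    have "r * (r * exp r + exp r) - 2 * r * (r * exp r) + r^2 * exp r = r * exp r"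
      by (simp add: algebra_simps power2_eq_square)
    moreover have "exp (-r) * (r * exp r) = r * (exp r * exp (-r))" by (simp add: ac_simps)
    ultimately show ?thesis by (simp add: exp_minus_inverse)
  qed
  moreover have "(\<lambda>k. exp (-r) * ((real k)^2 * (r^k / fact k) - 2 * r * (real k * (r^k / fact k)) + r^2 * (r^k / fact k)))
     = (\<lambda>k. r^k / fact k * exp (-r) * (real k - r)^2)"
  proof (rule ext)
    fix k
    have gen: "exp (-r) * (y^2 * q - 2 * r * (y * q) + r^2 * q) = q * exp (-r) * (y - r)^2" for q y :: real
      by (simp add: power2_eq_square algebra_simps)
    show "exp (-r) * ((real k)^2 * (r^k / fact k) - 2 * r * (real k * (r^k / fact k)) + r^2 * (r^k / fact k))
      = r^k / fact k * exp (-r) * (real k - r)^2" by (rule gen)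
  qed
  ultimately show ?thesis by simp
qed

lemma poisson_cheb:
  fixes M :: "'a measure" and N :: "'a \<Rightarrow> nat" and r a :: real
  assumes P: "prob_space M" and Nm: "N \<in> measurable M (count_space UNIV)" and r: "r \<ge> 0" and a: "a > 0"
    and pk: "\<And>k. measure M {\<omega>\<in>space M. N \<omega> = k} = r^k / fact k * exp (-r)"
  shows "measure M {\<omega>\<in>space M. a < \<bar>real (N \<omega>) - r\<bar>} \<le> r / a^2"
proof -
  interpret prob_space M by (rule P)
  define D where "D = distr M (count_space UNIV) N"
  define A where "A = {k::nat. a < \<bar>real k - r\<bar>}"
  define p where "p k = r^k / fact k * exp (-r)" for k :: nat
  have pnn: "p k \<ge> 0" for k using r by (simp add: p_def)
  have seteq: "{\<omega>\<in>space M. a < \<bar>real (N \<omega>) - r\<bar>} = N -` A \<inter> space M" by (auto simp: A_def)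
  have Dk: "emeasure D {k} = ennreal (p k)" for k
  proof -
    have "emeasure D {k} = emeasure M (N -` {k} \<inter> space M)"
      unfolding D_def by (rule emeasure_distr[OF Nm]) simp
    also have "N -` {k} \<inter> space M = {\<omega>\<in>space M. N \<omega> = k}" by auto
    also have "emeasure M {\<omega>\<in>space M. N \<omega> = k} = ennreal (p k)"
      using pk[of k] by (simp add: emeasure_eq_measure p_def)
    finally show ?thesis .
  qed
  have summ: "(\<lambda>k. p k * (real k - r)^2) sums r"
    using poisson_var_sums[of r] by (simp add: p_def)
  have "emeasure M (N -` A \<inter> space M) = emeasure D A"
    unfolding D_def by (rule emeasure_distr[OF Nm, symmetric]) simp
  also have "\<dots> = (\<integral>\<^sup>+k. emeasure D {k} \<partial>count_space A)"
    by (rule emeasure_countable_singleton) (auto simp: D_def)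
  also have "\<dots> = (\<integral>\<^sup>+k. ennreal (p k) * indicator A k \<partial>count_space UNIV)"
    by (simp add: nn_integral_count_space_indicator Dk)
  also have "\<dots> \<le> (\<integral>\<^sup>+k. ennreal (p k * (real k - r)^2 / a^2) \<partial>count_space UNIV)"
  proof (intro nn_integral_mono)
    fix k :: nat
    show "ennreal (p k) * indicator A k \<le> ennreal (p k * (real k - r)^2 / a^2)"
    proof (cases "k \<in> A")
      case True
      then have "a^2 \<le> (real k - r)^2" using a unfolding A_def
      proof -
        have "a^2 \<le> \<bar>real k - r\<bar>^2" using a True unfolding A_def by (intro power_mono) auto
        then show ?thesis by simp
      qed
      then have "1 \<le> (real k - r)^2 / a^2" using a by simp
      then have "p k * 1 \<le> p k * ((real k - r)^2 / a^2)" using pnn by (intro mult_left_mono) auto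
      then show ?thesis using True by (simp add: ennreal_leI)
    qed simp
  qed
  also have "\<dots> = ennreal (\<Sum>k. p k * (real k - r)^2 / a^2)"
    using summ pnn
    by (simp add: nn_integral_count_space_nat suminf_ennreal2 summable_divide sums_summable)
  also have "(\<Sum>k. p k * (real k - r)^2 / a^2) = r / a^2"
    using sums_divide[OF summ, of "a^2"] by (simp add: sums_iff)
  finally have "emeasure M (N -` A \<inter> space M) \<le> ennreal (r / a^2)" .
  then show ?thesis unfolding seteq using r a
    by (simp add: emeasure_eq_measure)
qed


lemma det_bound:
  fixes g a b :: "nat \<Rightarrow> real" and I :: nat and xj e :: real
  assumes g: "\<forall>i\<le>I. g i \<ge> 0" and e: "e > 0"
  shows "\<exists>\<eta>>0. \<exists>\<delta>>0. \<forall>X0 t (n::nat\<Rightarrow>real). X0 > 0 \<longrightarrow> 0 < t \<longrightarrow> t < \<delta> \<longrightarrow>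
      (\<forall>i\<le>I. \<bar>n i / (X0 * t) - g i\<bar> \<le> \<eta>) \<longrightarrow>
      \<bar>((xj * X0 + (\<Sum>i\<le>I. n i * a i)) / (X0 + (\<Sum>i\<le>I. n i * b i)) - xj) / t
        - (\<Sum>i\<le>I. g i * (a i - xj * b i))\<bar> < e"
proof -
  define c where "c i = a i - xj * b i" for i
  define A where "A = (\<Sum>i\<le>I. \<bar>c i\<bar>)"
  define B where "B = (\<Sum>i\<le>I. (g i + 1) * \<bar>b i\<bar>)"
  define L where "L = (\<Sum>i\<le>I. g i * c i)"
  define \<eta> where "\<eta> = min 1 (e / (8 * (A + 1)))"
  define \<delta> where "\<delta> = min (1 / (2 * (B + 1))) (e / (8 * (\<bar>L\<bar> + 1) * (B + 1)))"
  have A0: "A \<ge> 0" unfolding A_def by (simp add: sum_nonneg)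
  have B0: "B \<ge> 0" unfolding B_def using g by (intro sum_nonneg) simp
  have eta0: "\<eta> > 0" using e A0 by (simp add: \<eta>_def)
  have delta0: "\<delta> > 0" using e B0 by (simp add: \<delta>_def)
  have etaA: "\<eta> * A \<le> e / 8"
  proof -
    have "\<eta> * A \<le> e / (8 * (A + 1)) * A" using A0 by (intro mult_right_mono) (auto simp: \<eta>_def)
    also have "\<dots> \<le> e / 8" using A0 e by (simp add: divide_simps)
    finally show ?thesis .
  qed
  have deltaB: "\<bar>L\<bar> * (\<delta> * B) \<le> e / 8"
  proof -
    have "\<bar>L\<bar> * (\<delta> * B) \<le> \<bar>L\<bar> * (e / (8 * (\<bar>L\<bar> + 1) * (B + 1)) * B)"
      using B0 by (intro mult_left_mono mult_right_mono) (auto simp: \<delta>_def)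
    also have "\<dots> = e / 8 * ((\<bar>L\<bar> * B) / ((\<bar>L\<bar> + 1) * (B + 1)))"
      using B0 by (simp add: field_simps)
    also have "\<dots> \<le> e / 8 * 1"
    proof (intro mult_left_mono)
      have "\<bar>L\<bar> * B \<le> (\<bar>L\<bar> + 1) * (B + 1)" using B0 by (simp add: algebra_simps)
      then show "\<bar>L\<bar> * B / ((\<bar>L\<bar> + 1) * (B + 1)) \<le> 1" using B0
        by (simp add: divide_simps)
    qed (use e in simp)
    finally show ?thesis by simp
  qed
  have deltaB2: "\<delta> * B < 1 / 2"
  proof -
    have "\<delta> * B \<le> 1 / (2 * (B + 1)) * B" using B0 by (intro mult_right_mono) (auto simp: \<delta>_def)
    also have "\<dots> < 1 / 2" using B0 by (simp add: divide_simps)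
    finally show ?thesis .
  qed
  have main: "\<And>X0 t (n::nat\<Rightarrow>real). X0 > 0 \<Longrightarrow> 0 < t \<Longrightarrow> t < \<delta> \<Longrightarrow>
      (\<forall>i\<le>I. \<bar>n i / (X0 * t) - g i\<bar> \<le> \<eta>) \<Longrightarrow>
      \<bar>((xj * X0 + (\<Sum>i\<le>I. n i * a i)) / (X0 + (\<Sum>i\<le>I. n i * b i)) - xj) / t
        - (\<Sum>i\<le>I. g i * (a i - xj * b i))\<bar> < e"
  proof -
    fix X0 t :: real and n :: "nat \<Rightarrow> real"
    assume X0: "X0 > 0" and t0: "0 < t" and tl: "t < \<delta>" and close: "\<forall>i\<le>I. \<bar>n i / (X0 * t) - g i\<bar> \<le> \<eta>"
    define u where "u i = n i / (X0 * t)" for i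
    define s1 where "s1 = (\<Sum>i\<le>I. u i * c i)"
    define s2 where "s2 = (\<Sum>i\<le>I. u i * b i)"
    have neq: "n i = X0 * t * u i" for i using X0 t0 by (simp add: u_def)
    have suma: "(\<Sum>i\<le>I. n i * a i) = X0 * t * (\<Sum>i\<le>I. u i * a i)"
      by (simp add: neq sum_distrib_left mult.assoc)
    have sumb: "(\<Sum>i\<le>I. n i * b i) = X0 * t * s2"
      by (simp add: neq sum_distrib_left mult.assoc s2_def)
    have s1eq: "s1 = (\<Sum>i\<le>I. u i * a i) - xj * s2"
      by (simp add: s1_def s2_def c_def algebra_simps sum_subtractf sum_distrib_left)
    have h1: "\<bar>s1 - L\<bar> \<le> \<eta> * A"
    proof -
      have "s1 - L = (\<Sum>i\<le>I. (u i - g i) * c i)"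
        by (simp add: s1_def L_def algebra_simps sum_subtractf)
      also have "\<bar>\<dots>\<bar> \<le> (\<Sum>i\<le>I. \<bar>(u i - g i) * c i\<bar>)" by (rule sum_abs)
      also have "\<dots> \<le> (\<Sum>i\<le>I. \<eta> * \<bar>c i\<bar>)"
        using close by (intro sum_mono) (auto simp: abs_mult u_def intro: mult_right_mono)
      also have "\<dots> = \<eta> * A" by (simp add: A_def sum_distrib_left)
      finally show ?thesis .
    qed
    have h2: "\<bar>s2\<bar> \<le> B"
    proof -
      have "\<bar>s2\<bar> \<le> (\<Sum>i\<le>I. \<bar>u i * b i\<bar>)" unfolding s2_def by (rule sum_abs)
      also have "\<dots> \<le> (\<Sum>i\<le>I. (g i + 1) * \<bar>b i\<bar>)"
      proof (intro sum_mono)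
        fix i assume "i \<in> {..I}"
        then have "\<bar>u i - g i\<bar> \<le> \<eta>" "g i \<ge> 0" using close g by (auto simp: u_def)
        then have "\<bar>u i\<bar> \<le> g i + 1" using \<eta>_def by linarith
        then show "\<bar>u i * b i\<bar> \<le> (g i + 1) * \<bar>b i\<bar>" by (simp add: abs_mult mult_right_mono)
      qed
      finally show ?thesis by (simp add: B_def)
    qed
    have ts2: "t * \<bar>s2\<bar> \<le> \<delta> * B"
      using h2 tl t0 B0 by (intro mult_mono) auto
    have den: "1 + t * s2 \<ge> 1 / 2"
    proof -
      have "\<bar>t * s2\<bar> < 1 / 2" using ts2 deltaB2 t0 by (simp add: abs_mult)
      then show ?thesis by linarith
    qed
    have Yeq: "((xj * X0 + (\<Sum>i\<le>I. n i * a i)) / (X0 + (\<Sum>i\<le>I. n i * b i)) - xj) / t = s1 / (1 + t * s2)"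
    proof -
      have d1: "X0 + (\<Sum>i\<le>I. n i * b i) = X0 * (1 + t * s2)" unfolding sumb by (simp add: algebra_simps)
      have nz: "1 + t * s2 \<noteq> 0" using den by linarith
      define Sa where "Sa = (\<Sum>i\<le>I. u i * a i)"
      have "(xj * X0 + X0 * t * Sa) / (X0 * (1 + t * s2)) = (xj + t * Sa) / (1 + t * s2)"
      proof -
        have e1: "xj * X0 + X0 * t * Sa = X0 * (xj + t * Sa)" by (simp add: algebra_simps)
        show ?thesis unfolding e1 by (rule mult_divide_mult_cancel_left) (use X0 in simp)
      qed
      also have "\<dots> - xj = t * (Sa - xj * s2) / (1 + t * s2)"
        using nz by (simp add: field_simps)
      finally have "((xj * X0 + X0 * t * Sa) / (X0 * (1 + t * s2)) - xj) / t = (Sa - xj * s2) / (1 + t * s2)"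
        using t0 by simp
      then show ?thesis unfolding d1 suma s1eq Sa_def .
    qed
    define D where "D = 1 + t * s2"
    have D0: "D > 0" "D \<ge> 1/2" using den by (auto simp: D_def)
    have "s1 / D - L = (s1 - L - L * (t * s2)) / D"
      using D0 unfolding D_def by (simp add: field_simps)
    then have "\<bar>s1 / D - L\<bar> = \<bar>s1 - L - L * (t * s2)\<bar> / D"
      using D0 by (simp add: abs_divide)
    also have "\<dots> \<le> \<bar>s1 - L - L * (t * s2)\<bar> / (1/2)"
      using D0 by (intro divide_left_mono) auto
    also have "\<dots> = 2 * \<bar>s1 - L - L * (t * s2)\<bar>" by simp
    also have "\<dots> \<le> 2 * (\<bar>s1 - L\<bar> + \<bar>L\<bar> * (t * \<bar>s2\<bar>))"
    proof -
      have "\<bar>s1 - L - L * (t * s2)\<bar> \<le> \<bar>s1 - L\<bar> + \<bar>L * (t * s2)\<bar>" by (rule abs_triangle_ineq4)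
      moreover have "\<bar>L * (t * s2)\<bar> = \<bar>L\<bar> * (t * \<bar>s2\<bar>)" using t0 by (simp add: abs_mult)
      ultimately show ?thesis by simp
    qed
    also have "\<dots> \<le> 2 * (\<eta> * A + \<bar>L\<bar> * (\<delta> * B))"
    proof -
      have "\<bar>L\<bar> * (t * \<bar>s2\<bar>) \<le> \<bar>L\<bar> * (\<delta> * B)" using ts2 by (intro mult_left_mono) auto
      then show ?thesis using h1 by simp
    qed
    also have "\<dots> < e" proof -
      have "\<eta> * A + \<bar>L\<bar> * (\<delta> * B) \<le> e / 4" using etaA deltaB by linarith
      then have "2 * (\<eta> * A + \<bar>L\<bar> * (\<delta> * B)) \<le> 2 * (e / 4)" by (rule mult_left_mono) simp
      also have "2 * (e / 4) < e" using e by simp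
      finally show ?thesis .
    qed
    finally show "\<bar>((xj * X0 + (\<Sum>i\<le>I. n i * a i)) / (X0 + (\<Sum>i\<le>I. n i * b i)) - xj) / t
        - (\<Sum>i\<le>I. g i * (a i - xj * b i))\<bar> < e"
      unfolding Yeq D_def[symmetric] by (simp add: L_def c_def)
  qed
  show ?thesis using eta0 delta0 main by blast
qed

theorem theorem1:
  fixes I J :: nat
    and Cc :: "nat \<Rightarrow> nat \<Rightarrow> real"
    and lam :: "nat \<Rightarrow> real"
    and dX :: "nat \<Rightarrow> nat \<Rightarrow> int"
    and x :: "nat \<Rightarrow> real"
    and d dt :: "real \<Rightarrow> real"
    and X :: "real \<Rightarrow> nat \<Rightarrow> nat"
    and M :: "real \<Rightarrow> 'a measure"
    and N :: "real \<Rightarrow> nat \<Rightarrow> 'a \<Rightarrow> nat"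
  assumes lam_pos: "\<And>i. i \<le> I \<Longrightarrow> lam i > 0"
    and d_pos: "\<And>\<rho>. d \<rho> > 0"
    and dt_pos: "\<And>\<rho>. dt \<rho> > 0"
    and d_lim: "filterlim d at_top at_top"
    and dt_lim: "(dt \<longlongrightarrow> 0) at_top"
    and d_dt_const: "\<exists>c. \<forall>\<rho>. d \<rho> * dt \<rho> = c"
    and X_order: "\<exists>K>0. \<forall>\<rho>. \<forall>j\<le>J. d \<rho> ^ 2 / K \<le> real (X \<rho> j) \<and> real (X \<rho> j) \<le> K * d \<rho> ^ 2"
    and state: "\<And>\<rho> j. 1 \<le> j \<Longrightarrow> j \<le> J \<Longrightarrow> real (X \<rho> j) = x j * real (X \<rho> 0)"
    and clocks_nonneg: "\<And>\<rho> i. i \<le> I \<Longrightarrow> clocks Cc J (\<lambda>j. real (X \<rho> j)) i \<ge> 0"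
    and nu0_nz: "nu Cc lam dX I J x 0 \<noteq> 0"
    and prob: "\<And>\<rho>. prob_space (M \<rho>)"
    and N_indep: "\<And>\<rho>. prob_space.indep_vars (M \<rho>) (\<lambda>_. count_space UNIV) (N \<rho>) {..I}"
    and N_poisson: "\<And>\<rho> i k. i \<le> I \<Longrightarrow>
        measure (M \<rho>) {\<omega> \<in> space (M \<rho>). N \<rho> i \<omega> = k} =
          (let r = clocks Cc J (\<lambda>j. real (X \<rho> j)) i * lam i * dt \<rho> in r ^ k / fact k * exp (- r))"
    and j_range: "1 \<le> j" "j \<le> J"
  shows "conv_in_prob M
           (\<lambda>\<rho> \<omega>. ((real (X \<rho> j) + (\<Sum>i\<le>I. real (N \<rho> i \<omega>) * real_of_int (dX i j)))
                      / (real (X \<rho> 0) + (\<Sum>i\<le>I. real (N \<rho> i \<omega>) * real_of_int (dX i 0)))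
                    - x j) / dt \<rho>)
           (gamma Cc lam I J x * nu Cc lam dX I J x 0 * (xhat Cc lam dX I J x j - x j))
           at_top"
proof -
  obtain K where K0: "K > 0" and Kb: "\<forall>\<rho>. \<forall>j\<le>J. d \<rho> ^ 2 / K \<le> real (X \<rho> j) \<and> real (X \<rho> j) \<le> K * d \<rho> ^ 2"
    using X_order by blast
  obtain c where c: "\<And>\<rho>. d \<rho> * dt \<rho> = c" using d_dt_const by blast
  have c0: "c > 0" using c[of 0] d_pos[of 0] dt_pos[of 0] by (metis mult_pos_pos)
  define X0 where "X0 \<rho> = real (X \<rho> 0)" for \<rho>
  have X0low: "d \<rho> ^ 2 / K \<le> X0 \<rho>" for \<rho> using Kb by (simp add: X0_def)
  have X0pos: "X0 \<rho> > 0" for \<rho>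
  proof -
    have "d \<rho> ^ 2 / K > 0" using d_pos[of \<rho>] K0 by simp
    then show ?thesis using X0low[of \<rho>] by linarith
  qed
  define E where "E \<rho> = X0 \<rho> * dt \<rho>" for \<rho>
  have Epos: "E \<rho> > 0" for \<rho> using X0pos dt_pos by (simp add: E_def)
  have Elow: "c * d \<rho> / K \<le> E \<rho>" for \<rho>
  proof -
    have e1: "d \<rho> ^ 2 / K * dt \<rho> \<le> X0 \<rho> * dt \<rho>"
      using X0low[of \<rho>] dt_pos[of \<rho>] by (intro mult_right_mono) auto
    have e2: "d \<rho> ^ 2 / K * dt \<rho> = c * d \<rho> / K"
      using c[of \<rho>] by (simp add: power2_eq_square field_simps)
    show ?thesis using e1 unfolding e2 E_def .
  qed
  have Einv: "((\<lambda>\<rho>. 1 / E \<rho>) \<longlongrightarrow> 0) at_top"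
  proof (rule tendsto_sandwich[of "\<lambda>_. 0" _ _ "\<lambda>\<rho>. K / c * inverse (d \<rho>)"])
    show "\<forall>\<^sub>F \<rho> in at_top. 0 \<le> 1 / E \<rho>" using Epos by (simp add: less_imp_le)
    show "\<forall>\<^sub>F \<rho> in at_top. 1 / E \<rho> \<le> K / c * inverse (d \<rho>)"
    proof (intro always_eventually allI)
      fix \<rho> :: real
      have pos: "c * d \<rho> / K > 0" using c0 d_pos[of \<rho>] K0 by simp
      have "1 / E \<rho> \<le> 1 / (c * d \<rho> / K)"
        using Elow[of \<rho>] pos Epos[of \<rho>] by (intro divide_left_mono mult_pos_pos) auto
      also have "\<dots> = K / c * inverse (d \<rho>)" using c0 K0 d_pos[of \<rho>] by (simp add: field_simps)
      finally show "1 / E \<rho> \<le> K / c * inverse (d \<rho>)" .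
    qed
    show "((\<lambda>_. 0) \<longlongrightarrow> (0::real)) at_top" by simp
    show "((\<lambda>\<rho>. K / c * inverse (d \<rho>)) \<longlongrightarrow> 0) at_top"
      by (rule tendsto_mult_right_zero[OF tendsto_inverse_0_at_top[OF d_lim]])
  qed
  define g where "g i = gamma_i Cc lam J x i" for i
  have clk: "clocks Cc J (\<lambda>j. real (X \<rho> j)) i = X0 \<rho> * clocks Cc J (ext_state x) i" for \<rho> i
    unfolding clocks_def sum_distrib_left
  proof (intro sum.cong refl)
    fix j assume j: "j \<in> {..J}"
    show "Cc i j * real (X \<rho> j) = X0 \<rho> * (Cc i j * ext_state x j)"
    proof (cases "j = 0")
      case True then show ?thesis by (simp add: X0_def ext_state_def)
    next
      case False
      then have "real (X \<rho> j) = x j * X0 \<rho>" using state[of j \<rho>] j by (simp add: X0_def)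
      then show ?thesis using False by (simp add: ext_state_def)
    qed
  qed
  have g_eq: "g i = clocks Cc J (ext_state x) i * lam i" for i
    by (simp add: g_def gamma_i_def ext_state_def)
  have g_nn: "\<forall>i\<le>I. g i \<ge> 0"
  proof (intro allI impI)
    fix i assume i: "i \<le> I"
    have "0 \<le> X0 0 * clocks Cc J (ext_state x) i" using clocks_nonneg[OF i, of 0] clk[of 0 i] by simp
    then have "0 \<le> clocks Cc J (ext_state x) i" using X0pos[of 0] by (simp add: zero_le_mult_iff)
    then show "g i \<ge> 0" using lam_pos[OF i] by (simp add: g_eq)
  qed
  have rate: "clocks Cc J (\<lambda>j. real (X \<rho> j)) i * lam i * dt \<rho> = E \<rho> * g i" for \<rho> i
    by (simp add: clk g_eq E_def)
  have Nmeas: "N \<rho> i \<in> measurable (M \<rho>) (count_space UNIV)" if i: "i \<le> I" for \<rho> i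
    using N_indep[of \<rho>] i unfolding prob_space.indep_vars_def2[OF prob] by auto
  have bad_bound: "measure (M \<rho>) {\<omega>\<in>space (M \<rho>). \<eta> < \<bar>real (N \<rho> i \<omega>) / (X0 \<rho> * dt \<rho>) - g i\<bar>}
      \<le> g i / (\<eta>^2 * E \<rho>)" if i: "i \<le> I" and eta: "\<eta> > 0" for \<rho> i \<eta>
  proof -
    have iff: "\<eta> < \<bar>real n / (X0 \<rho> * dt \<rho>) - g i\<bar> \<longleftrightarrow> \<eta> * E \<rho> < \<bar>real n - E \<rho> * g i\<bar>" for n :: nat
    proof -
      have "real n / (X0 \<rho> * dt \<rho>) - g i = (real n - E \<rho> * g i) / E \<rho>"
        using X0pos[of \<rho>] dt_pos[of \<rho>] by (simp add: E_def field_simps)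
      then have "\<bar>real n / (X0 \<rho> * dt \<rho>) - g i\<bar> = \<bar>real n - E \<rho> * g i\<bar> / E \<rho>"
        using Epos[of \<rho>] by (simp add: abs_divide)
      then show ?thesis using Epos[of \<rho>] by (simp add: pos_less_divide_eq)
    qed
    have "measure (M \<rho>) {\<omega>\<in>space (M \<rho>). \<eta> * E \<rho> < \<bar>real (N \<rho> i \<omega>) - E \<rho> * g i\<bar>} \<le> E \<rho> * g i / (\<eta> * E \<rho>)^2"
    proof (rule poisson_cheb[OF prob Nmeas[OF i]])
      show "0 \<le> E \<rho> * g i" using Epos[of \<rho>] g_nn i by simp
      show "0 < \<eta> * E \<rho>" using Epos[of \<rho>] eta by simp
      fix k
      show "measure (M \<rho>) {\<omega> \<in> space (M \<rho>). N \<rho> i \<omega> = k} = (E \<rho> * g i) ^ k / fact k * exp (- (E \<rho> * g i))"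
        using N_poisson[OF i, of \<rho> k] by (simp add: rate Let_def)
    qed
    also have "E \<rho> * g i / (\<eta> * E \<rho>)^2 = g i / (\<eta>^2 * E \<rho>)"
      using Epos[of \<rho>] eta by (simp add: power2_eq_square field_simps)
    finally show ?thesis by (simp add: iff)
  qed
  define G where "G = gamma Cc lam I J x"
  have nu_eq: "nu Cc lam dX I J x k = (\<Sum>i\<le>I. real_of_int (dX i k) * g i) / G" for k
    unfolding nu_def p_i_def G_def[symmetric] g_def[symmetric] by (simp add: sum_divide_distrib)
  have G0: "G \<noteq> 0" using nu0_nz nu_eq[of 0] by auto
  have Lval: "gamma Cc lam I J x * nu Cc lam dX I J x 0 * (xhat Cc lam dX I J x j - x j)
      = (\<Sum>i\<le>I. g i * (real_of_int (dX i j) - x j * real_of_int (dX i 0)))"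
  proof -
    have "gamma Cc lam I J x * nu Cc lam dX I J x 0 * (xhat Cc lam dX I J x j - x j)
        = G * nu Cc lam dX I J x j - x j * (G * nu Cc lam dX I J x 0)"
      using nu0_nz unfolding xhat_def G_def by (simp add: field_simps)
    also have "\<dots> = (\<Sum>i\<le>I. real_of_int (dX i j) * g i) - x j * (\<Sum>i\<le>I. real_of_int (dX i 0) * g i)"
      using G0 by (simp add: nu_eq)
    also have "\<dots> = (\<Sum>i\<le>I. g i * (real_of_int (dX i j) - x j * real_of_int (dX i 0)))"
      by (simp add: algebra_simps sum_subtractf sum_distrib_left)
    finally show ?thesis .
  qed
  show ?thesis unfolding conv_in_prob_def Lval
  proof (intro allI impI)
    fix e :: real assume e: "e > 0"
    obtain \<eta> \<delta> where eta: "\<eta> > 0" and delta: "\<delta> > 0" and detA: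
      "\<forall>X0 t (n::nat\<Rightarrow>real). X0 > 0 \<longrightarrow> 0 < t \<longrightarrow> t < \<delta> \<longrightarrow>
      (\<forall>i\<le>I. \<bar>n i / (X0 * t) - g i\<bar> \<le> \<eta>) \<longrightarrow>
      \<bar>((x j * X0 + (\<Sum>i\<le>I. n i * real_of_int (dX i j))) / (X0 + (\<Sum>i\<le>I. n i * real_of_int (dX i 0))) - x j) / t
        - (\<Sum>i\<le>I. g i * (real_of_int (dX i j) - x j * real_of_int (dX i 0)))\<bar> < e"
      using det_bound[where a = "\<lambda>i. real_of_int (dX i j)" and b = "\<lambda>i. real_of_int (dX i 0)" and xj = "x j", OF g_nn e]
      by (elim exE conjE) (rule that)
    note det = detA[rule_format (no_asm)]
    define L where "L = (\<Sum>i\<le>I. g i * (real_of_int (dX i j) - x j * real_of_int (dX i 0)))"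
    define h where "h \<rho> = (\<Sum>i\<le>I. g i / \<eta>^2) * (1 / E \<rho>)" for \<rho>
    have ev: "\<forall>\<^sub>F \<rho> in at_top. dt \<rho> < \<delta>" using order_tendstoD(2)[OF dt_lim delta] .
    have bound: "\<forall>\<^sub>F \<rho> in at_top. measure (M \<rho>) {\<omega> \<in> space (M \<rho>). e < \<bar>((real (X \<rho> j) + (\<Sum>i\<le>I. real (N \<rho> i \<omega>) * real_of_int (dX i j)))
                      / (real (X \<rho> 0) + (\<Sum>i\<le>I. real (N \<rho> i \<omega>) * real_of_int (dX i 0)))
                    - x j) / dt \<rho> - L\<bar>} \<le> h \<rho>"
      using ev
    proof eventually_elim
      case (elim \<rho>)
      interpret P: prob_space "M \<rho>" by (rule prob)
      define B where "B i = {\<omega>\<in>space (M \<rho>). \<eta> < \<bar>real (N \<rho> i \<omega>) / (X0 \<rho> * dt \<rho>) - g i\<bar>}" for i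
      have Bsets: "B i \<in> sets (M \<rho>)" if "i \<le> I" for i
      proof -
        have "B i = N \<rho> i -` {k. \<eta> < \<bar>real k / (X0 \<rho> * dt \<rho>) - g i\<bar>} \<inter> space (M \<rho>)"
          by (auto simp: B_def)
        also have "\<dots> \<in> sets (M \<rho>)" by (rule measurable_sets[OF Nmeas[OF that]]) simp
        finally show ?thesis .
      qed
      have sub: "{\<omega> \<in> space (M \<rho>). e < \<bar>((real (X \<rho> j) + (\<Sum>i\<le>I. real (N \<rho> i \<omega>) * real_of_int (dX i j)))
                      / (real (X \<rho> 0) + (\<Sum>i\<le>I. real (N \<rho> i \<omega>) * real_of_int (dX i 0)))
                    - x j) / dt \<rho> - L\<bar>} \<subseteq> (\<Union>i\<in>{..I}. B i)"
      proof
        fix \<omega> assume w: "\<omega> \<in> {\<omega> \<in> space (M \<rho>). e < \<bar>((real (X \<rho> j) + (\<Sum>i\<le>I. real (N \<rho> i \<omega>) * real_of_int (dX i j)))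
                      / (real (X \<rho> 0) + (\<Sum>i\<le>I. real (N \<rho> i \<omega>) * real_of_int (dX i 0)))
                    - x j) / dt \<rho> - L\<bar>}"
        show "\<omega> \<in> (\<Union>i\<in>{..I}. B i)"
        proof (rule ccontr)
          assume "\<omega> \<notin> (\<Union>i\<in>{..I}. B i)"
          then have cl: "\<forall>i\<le>I. \<bar>real (N \<rho> i \<omega>) / (X0 \<rho> * dt \<rho>) - g i\<bar> \<le> \<eta>"
            using w by (auto simp: B_def not_less)
          have "\<bar>((x j * X0 \<rho> + (\<Sum>i\<le>I. real (N \<rho> i \<omega>) * real_of_int (dX i j))) / (X0 \<rho> + (\<Sum>i\<le>I. real (N \<rho> i \<omega>) * real_of_int (dX i 0))) - x j) / dt \<rho>
             - L\<bar> < e"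
            unfolding L_def by (rule det[OF X0pos dt_pos elim cl])
          moreover have "real (X \<rho> j) = x j * X0 \<rho>" using state[OF j_range] by (simp add: X0_def)
          ultimately show False using w by (simp add: X0_def)
        qed
      qed
      have "measure (M \<rho>) {\<omega> \<in> space (M \<rho>). e < \<bar>((real (X \<rho> j) + (\<Sum>i\<le>I. real (N \<rho> i \<omega>) * real_of_int (dX i j)))
                      / (real (X \<rho> 0) + (\<Sum>i\<le>I. real (N \<rho> i \<omega>) * real_of_int (dX i 0)))
                    - x j) / dt \<rho> - L\<bar>} \<le> measure (M \<rho>) (\<Union>i\<in>{..I}. B i)"
        using sub Bsets by (intro P.finite_measure_mono) auto
      also have "\<dots> \<le> (\<Sum>i\<in>{..I}. measure (M \<rho>) (B i))"
        using Bsets by (intro P.finite_measure_subadditive_finite) auto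
      also have "\<dots> \<le> (\<Sum>i\<in>{..I}. g i / (\<eta>^2 * E \<rho>))"
        by (intro sum_mono) (unfold B_def, rule bad_bound[OF _ eta], simp)
      also have "\<dots> = h \<rho>" by (simp add: h_def sum_divide_distrib divide_divide_eq_left)
      finally show ?case .
    qed
    have hlim: "(h \<longlongrightarrow> 0) at_top"
      unfolding h_def by (rule tendsto_mult_right_zero[OF Einv])
    show "((\<lambda>\<rho>. measure (M \<rho>) {\<omega> \<in> space (M \<rho>). e < \<bar>((real (X \<rho> j) + (\<Sum>i\<le>I. real (N \<rho> i \<omega>) * real_of_int (dX i j)))
                      / (real (X \<rho> 0) + (\<Sum>i\<le>I. real (N \<rho> i \<omega>) * real_of_int (dX i 0)))
                    - x j) / dt \<rho> - (\<Sum>i\<le>I. g i * (real_of_int (dX i j) - x j * real_of_int (dX i 0)))\<bar>}) \<longlongrightarrow> 0) at_top"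
      unfolding L_def[symmetric]
      by (rule tendsto_sandwich[OF _ bound tendsto_const hlim]) simp
  qed
qed

end
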